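(* Let $X$ be a gamble, $I\subset\mathbb{R}$ an interval containing the image set of $X$, $\phi:I\to\mathbb{R}$ convex and $\psi:I\to\mathbb{R}$ concave. Let $\underline{P}$ be a 2-coherent lower prevision (defined on a set of gambles containing all gambles involved below, e.g. on all gambles) and $\overline{P}$ its conjugate upper prevision, and assume $\underline{P}(X)$ and $\overline{P}(X)$ are interior points of $I$. Then $$\underline{P}(\psi(X))\le\min\{\psi(\underline{P}(X)),\psi(\overline{P}(X))\},\qquad \overline{P}(\phi(X))\ge\max\{\phi(\underline{P}(X)),\phi(\overline{P}(X))\}.$$ Moreover: if $\phi'_+(\underline{P}(X))\ge 0$ then $\underline{P}(\phi(X))\ge\phi(\underline{P}(X))$; if $\phi'_-(\overline{P}(X))\le 0$ then $\underline{P}(\phi(X))\ge\phi(\overline{P}(X))$; if $\psi'_-(\overline{P}(X))\ge 0$ then $\overline{P}(\psi(X))\le\psi(\overline{P}(X))$; if $\psi'_+(\underline{P}(X))\le 0$ then $\overline{P}(\psi(X))\le\psi(\underline{P}(X))$.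
   Context: $\Pi$ is a partition of the sure event into pairwise disjoint non-impossible events; a gamble is a bounded map $X:\Pi\to\mathbb{R}$, with image set $\{X(\omega):\omega\in\Pi\}$; $f(X)$ denotes the gamble $\omega\mapsto f(X(\omega))$. A lower prevision $\underline{P}:\mathcal{D}\to\mathbb{R}$ on a set of gambles $\mathcal{D}$ is 2-coherent iff for all $X_0,X_1\in\mathcal{D}$, all $s_1\ge 0$ and all $s_0\in\mathbb{R}$, $\sup\big[s_1(X_1-\underline{P}(X_1))-s_0(X_0-\underline{P}(X_0))\big]\ge 0$. The conjugate upper prevision is $\overline{P}(Y)=-\underline{P}(-Y)$. $f'_+,f'_-$ denote right and left derivatives. *)

theory Defs
  imports "HOL-Analysis.Analysis"
begin

text \<open>The partition \<Pi> is modelled by a (nonempty) type 'w; a gamble is a bounded map 'w \<Rightarrow> real.\<close>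

definition gamble :: "('w \<Rightarrow> real) \<Rightarrow> bool" where
  "gamble X \<longleftrightarrow> bounded (range X)"

definition two_coherent :: "('w \<Rightarrow> real) set \<Rightarrow> (('w \<Rightarrow> real) \<Rightarrow> real) \<Rightarrow> bool" where
  "two_coherent D P \<longleftrightarrow> (\<forall>X0\<in>D. \<forall>X1\<in>D. \<forall>s1 s0. s1 \<ge> 0 \<longrightarrow>
      Sup (range (\<lambda>w. s1 * (X1 w - P X1) - s0 * (X0 w - P X0))) \<ge> 0)"

definition upper_prev :: "(('w \<Rightarrow> real) \<Rightarrow> real) \<Rightarrow> ('w \<Rightarrow> real) \<Rightarrow> real" where
  "upper_prev P Y = - P (\<lambda>w. - Y w)"

definition right_deriv :: "(real \<Rightarrow> real) \<Rightarrow> real \<Rightarrow> real" where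
  "right_deriv f x = Lim (at_right x) (\<lambda>y. (f y - f x) / (y - x))"

definition left_deriv :: "(real \<Rightarrow> real) \<Rightarrow> real \<Rightarrow> real" where
  "left_deriv f x = Lim (at_left x) (\<lambda>y. (f y - f x) / (y - x))"

end

theory Submission
  imports Defs
begin

lemma sw: "((a::real) - b) / (c - d) = (b - a) / (d - c)"
proof -
  have "(b - a) / (d - c) = (-(a-b)) / (-(c-d))" by simp
  also have "\<dots> = (a - b) / (c - d)" by (rule minus_divide_divide)
  finally show ?thesis by simp
qed

lemma slope_mono:
  fixes f :: "real \<Rightarrow> real"
  assumes f: "convex_on I f" and I: "x \<in> I" "y \<in> I" "c \<in> I"
    and xy: "x < y" "x \<noteq> c" "y \<noteq> c"
  shows "(f x - f c) / (x - c) \<le> (f y - f c) / (y - c)"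
proof -
  consider "c < x" | "x < c" "c < y" | "y < c" using xy by linarith
  then show ?thesis
  proof cases
    case 1
    from convex_on_slope_le(1)[OF f I(3) I(2) 1 xy(1)] show ?thesis
      by (simp only: sw[of "f c"] sw[of c])
  next
    case 2
    from convex_on_slope_le[OF f I(1) I(2) 2] show ?thesis
      using sw[of "f c" "f y" c y] by linarith
  next
    case 3
    from convex_on_slope_le(2)[OF f I(1) I(3) xy(1) 3] show ?thesis .
  qed
qed

lemma right_sub:
  fixes f :: "real \<Rightarrow> real"
  assumes f: "convex_on I f" and c: "c \<in> interior I"
  shows "\<exists>a. ((\<lambda>y. (f y - f c) / (y - c)) \<longlongrightarrow> a) (at_right c) \<and> (\<forall>x\<in>I. f x \<ge> f c + a * (x - c))"
proof -
  define q where "q = (\<lambda>y. (f y - f c) / (y - c))"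
  obtain e where e: "e > 0" "ball c e \<subseteq> I" using c mem_interior by blast
  have cI: "c \<in> I" using c interior_subset by blast
  have inI: "z \<in> I" if "\<bar>z - c\<bar> < e" for z using e that by (auto simp: dist_real_def)
  have mem: "z \<in> I" if "z \<in> {c<..<c+e}" for z using that by (intro inI) auto
  have mem2: "c - e/2 \<in> I" using e by (intro inI) auto
  define S where "S = q ` {c<..<c+e}"
  define a where "a = Inf S"
  have lo: "q (c - e/2) \<le> q y" if "y \<in> {c<..<c+e}" for y
    unfolding q_def apply (rule slope_mono[OF f]) using that e mem mem2 cI by auto
  have Sne: "S \<noteq> {}" using e unfolding S_def by auto
  have bdd: "bdd_below S" unfolding S_def using lo by (intro bdd_belowI[of _ "q (c - e/2)"]) auto
  have aS: "a \<le> q y" if "y \<in> {c<..<c+e}" for y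
    unfolding a_def S_def using that bdd S_def by (auto intro!: cInf_lower)
  have lim: "(q \<longlongrightarrow> a) (at_right c)"
  proof (rule order_tendstoI)
    fix b assume "b < a"
    show "\<forall>\<^sub>F y in at_right c. b < q y"
      unfolding eventually_at_right_field using e aS \<open>b < a\<close>
      by (intro exI[of _ "c+e"]) (auto intro: less_le_trans)
  next
    fix b assume "a < b"
    then obtain s where s: "s \<in> S" "s < b" unfolding a_def using cInf_less_iff[OF Sne bdd] by blast
    then obtain y0 where y0: "y0 \<in> {c<..<c+e}" "q y0 < b" unfolding S_def by auto
    show "\<forall>\<^sub>F y in at_right c. q y < b"
      unfolding eventually_at_right_field
    proof (intro exI[of _ y0] conjI allI impI)
      show "c < y0" using y0 by auto
      fix y assume "c < y" "y < y0"
      have "q y \<le> q y0" unfolding q_def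
        apply (rule slope_mono[OF f]) using y0 \<open>c < y\<close> \<open>y < y0\<close> mem cI by auto
      then show "q y < b" using y0 by linarith
    qed
  qed
  have sub: "f x \<ge> f c + a * (x - c)" if x: "x \<in> I" for x
  proof -
    consider "x > c" | "x = c" | "x < c" by linarith
    then show ?thesis
    proof cases
      case 1
      define y where "y = c + min (x - c) e / 2"
      have m: "0 < min (x-c) e" "min (x-c) e \<le> x - c" "min (x-c) e \<le> e" using 1 e by auto
      have y1: "c < y" "y < c + e" "y < x" using 1 e unfolding y_def by (auto simp: min_def field_simps)
      have y: "y \<in> {c<..<c+e}" "y < x" using y1 by auto
      have "q y \<le> q x" unfolding q_def
        apply (rule slope_mono[OF f]) using y x 1 mem cI by auto
      then have "a \<le> q x" using aS[OF y(1)] by linarith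
      moreover have "f x - f c = q x * (x - c)" using 1 unfolding q_def by simp
      moreover have "a * (x - c) \<le> q x * (x - c)" using \<open>a \<le> q x\<close> 1 by (intro mult_right_mono) auto
      ultimately show ?thesis by linarith
    next
      case 2 then show ?thesis by simp
    next
      case 3
      have "q x \<le> a" unfolding a_def S_def
      proof (rule cInf_greatest)
        show "q ` {c<..<c+e} \<noteq> {}" using Sne S_def by simp
        fix s assume "s \<in> q ` {c<..<c+e}"
        then obtain y where yy: "y \<in> {c<..<c+e}" "s = q y" by auto
        have "q x \<le> q y" unfolding q_def
          apply (rule slope_mono[OF f]) using x 3 yy(1) mem cI by auto
        then show "q x \<le> s" using yy(2) by simp
      qed
      moreover have "f x - f c = q x * (x - c)" using 3 unfolding q_def by simp
      moreover have "a * (x - c) \<le> q x * (x - c)" using \<open>q x \<le> a\<close> 3 by (intro mult_right_mono_neg) auto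
      ultimately show ?thesis by linarith
    qed
  qed
  show ?thesis by (intro exI[of _ a] conjI lim[unfolded q_def] ballI sub)
qed

lemma left_sub:
  fixes f :: "real \<Rightarrow> real"
  assumes f: "convex_on I f" and c: "c \<in> interior I"
  shows "\<exists>a. ((\<lambda>y. (f y - f c) / (y - c)) \<longlongrightarrow> a) (at_left c) \<and> (\<forall>x\<in>I. f x \<ge> f c + a * (x - c))"
proof -
  define q where "q = (\<lambda>y. (f y - f c) / (y - c))"
  obtain e where e: "e > 0" "ball c e \<subseteq> I" using c mem_interior by blast
  have cI: "c \<in> I" using c interior_subset by blast
  have inI: "z \<in> I" if "\<bar>z - c\<bar> < e" for z using e that by (auto simp: dist_real_def)
  have mem: "z \<in> I" if "z \<in> {c-e<..<c}" for z using that by (intro inI) auto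
  have mem2: "c + e/2 \<in> I" using e by (intro inI) auto
  define S where "S = q ` {c-e<..<c}"
  define a where "a = Sup S"
  have hi: "q y \<le> q (c + e/2)" if "y \<in> {c-e<..<c}" for y
    unfolding q_def apply (rule slope_mono[OF f]) using that e mem mem2 cI by auto
  have Sne: "S \<noteq> {}" using e unfolding S_def by auto
  have bdd: "bdd_above S" unfolding S_def using hi by (intro bdd_aboveI[of _ "q (c + e/2)"]) auto
  have aS: "q y \<le> a" if "y \<in> {c-e<..<c}" for y
    unfolding a_def S_def using that bdd S_def by (auto intro!: cSup_upper)
  have lim: "(q \<longlongrightarrow> a) (at_left c)"
  proof (rule order_tendstoI)
    fix b assume "a < b"
    show "\<forall>\<^sub>F y in at_left c. q y < b"
      unfolding eventually_at_left_field using e aS \<open>a < b\<close>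
      by (intro exI[of _ "c-e"]) (auto intro: le_less_trans)
  next
    fix b assume "b < a"
    then obtain s where s: "s \<in> S" "b < s" unfolding a_def using less_cSup_iff[OF Sne bdd] by blast
    then obtain y0 where y0: "y0 \<in> {c-e<..<c}" "b < q y0" unfolding S_def by auto
    show "\<forall>\<^sub>F y in at_left c. b < q y"
      unfolding eventually_at_left_field
    proof (intro exI[of _ y0] conjI allI impI)
      show "y0 < c" using y0 by auto
      fix y assume "y0 < y" "y < c"
      have "q y0 \<le> q y" unfolding q_def
        apply (rule slope_mono[OF f]) using y0 \<open>y0 < y\<close> \<open>y < c\<close> mem cI by auto
      then show "b < q y" using y0 by linarith
    qed
  qed
  have sub: "f x \<ge> f c + a * (x - c)" if x: "x \<in> I" for x
  proof -
    consider "x < c" | "x = c" | "x > c" by linarith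
    then show ?thesis
    proof cases
      case 1
      define y where "y = c - min (c - x) e / 2"
      have y1: "y < c" "c - e < y" "x < y" using 1 e unfolding y_def by (auto simp: min_def field_simps)
      have y: "y \<in> {c-e<..<c}" "x < y" using y1 by auto
      have "q x \<le> q y" unfolding q_def
        apply (rule slope_mono[OF f]) using y x 1 mem cI by auto
      then have "q x \<le> a" using aS[OF y(1)] by linarith
      moreover have "f x - f c = q x * (x - c)" using 1 unfolding q_def by simp
      moreover have "a * (x - c) \<le> q x * (x - c)" using \<open>q x \<le> a\<close> 1 by (intro mult_right_mono_neg) auto
      ultimately show ?thesis by linarith
    next
      case 2 then show ?thesis by simp
    next
      case 3
      have "a \<le> q x" unfolding a_def S_def
      proof (rule cSup_least)
        show "q ` {c-e<..<c} \<noteq> {}" using Sne S_def by simp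
        fix s assume "s \<in> q ` {c-e<..<c}"
        then obtain y where yy: "y \<in> {c-e<..<c}" "s = q y" by auto
        have "q y \<le> q x" unfolding q_def
          apply (rule slope_mono[OF f]) using x 3 yy(1) mem cI by auto
        then show "s \<le> q x" using yy(2) by simp
      qed
      moreover have "f x - f c = q x * (x - c)" using 3 unfolding q_def by simp
      moreover have "a * (x - c) \<le> q x * (x - c)" using \<open>a \<le> q x\<close> 3 by (intro mult_right_mono) auto
      ultimately show ?thesis by linarith
    qed
  qed
  show ?thesis by (intro exI[of _ a] conjI lim[unfolded q_def] ballI sub)
qed

lemma coh_sup:
  assumes "two_coherent D P" "X0 \<in> D" "X1 \<in> D" "s1 \<ge> 0"
    and "\<And>w. s1 * (X1 w - P X1) - s0 * (X0 w - P X0) \<le> K"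
  shows "0 \<le> K"
proof -
  have "0 \<le> Sup (range (\<lambda>w. s1 * (X1 w - P X1) - s0 * (X0 w - P X0)))"
    using assms(1-4) unfolding two_coherent_def by blast
  also have "\<dots> \<le> K" by (rule cSUP_least) (use assms(5) in auto)
  finally show ?thesis .
qed

lemma lemA:
  assumes "two_coherent D P" "Y \<in> D" "Z \<in> D"
    and "\<And>w. Y w - s * (Z w - P Z) \<le> k"
  shows "P Y \<le> k"
proof -
  have "0 \<le> k - P Y"
    by (rule coh_sup[OF assms(1) assms(3) assms(2), of 1 s]) (use assms(4) in \<open>auto simp: algebra_simps\<close>)
  then show ?thesis by simp
qed

lemma lemB:
  assumes "two_coherent D P" "Y \<in> D" "Z \<in> D" "s \<ge> 0"
    and "\<And>w. s * (Z w - P Z) - Y w \<le> - k"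
  shows "P Y \<ge> k"
proof -
  have "0 \<le> P Y - k"
    by (rule coh_sup[OF assms(1) assms(2) assms(3) assms(4), of 1]) (use assms(5) in \<open>auto simp: algebra_simps\<close>)
  then show ?thesis by simp
qed

lemma neg_quot:
  fixes g :: "real \<Rightarrow> real"
  assumes "((\<lambda>y. ((- g y) - (- g c)) / (y - c)) \<longlongrightarrow> a) F"
  shows "((\<lambda>y. (g y - g c) / (y - c)) \<longlongrightarrow> - a) F"
proof -
  have "((\<lambda>y. - (((- g y) - (- g c)) / (y - c))) \<longlongrightarrow> - a) F"
    by (rule tendsto_minus[OF assms])
  moreover have "(\<lambda>y. - (((- g y) - (- g c)) / (y - c))) = (\<lambda>y. (g y - g c) / (y - c))"
  proof (rule ext)
    fix y
    have "- (((- g y) - (- g c)) / (y - c)) = (- ((- g y) - (- g c))) / (y - c)" by (rule minus_divide_left)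
    also have "- ((- g y) - (- g c)) = g y - g c" by simp
    finally show "- (((- g y) - (- g c)) / (y - c)) = (g y - g c) / (y - c)" .
  qed
  ultimately show ?thesis by simp
qed

theorem theorem4:
  fixes X :: "'w \<Rightarrow> real" and I :: "real set"
    and \<phi> \<psi> :: "real \<Rightarrow> real"
    and D :: "('w \<Rightarrow> real) set" and P :: "('w \<Rightarrow> real) \<Rightarrow> real"
  assumes gambles: "\<forall>Y\<in>D. gamble Y"
    and X_gamble: "gamble X"
    and I_interval: "is_interval I"
    and range_X: "range X \<subseteq> I"
    and phi_convex: "convex_on I \<phi>"
    and psi_concave: "concave_on I \<psi>"
    and coh: "two_coherent D P"
    and inD: "X \<in> D" "(\<lambda>w. - X w) \<in> D"
      "(\<lambda>w. \<phi> (X w)) \<in> D" "(\<lambda>w. - \<phi> (X w)) \<in> D"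
      "(\<lambda>w. \<psi> (X w)) \<in> D" "(\<lambda>w. - \<psi> (X w)) \<in> D"
    and int_low: "P X \<in> interior I"
    and int_up: "upper_prev P X \<in> interior I"
  shows "P (\<lambda>w. \<psi> (X w)) \<le> min (\<psi> (P X)) (\<psi> (upper_prev P X)) \<and>
    upper_prev P (\<lambda>w. \<phi> (X w)) \<ge> max (\<phi> (P X)) (\<phi> (upper_prev P X)) \<and>
    (right_deriv \<phi> (P X) \<ge> 0 \<longrightarrow> P (\<lambda>w. \<phi> (X w)) \<ge> \<phi> (P X)) \<and>
    (left_deriv \<phi> (upper_prev P X) \<le> 0 \<longrightarrow> P (\<lambda>w. \<phi> (X w)) \<ge> \<phi> (upper_prev P X)) \<and>
    (left_deriv \<psi> (upper_prev P X) \<ge> 0 \<longrightarrow> upper_prev P (\<lambda>w. \<psi> (X w)) \<le> \<psi> (upper_prev P X)) \<and>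
    (right_deriv \<psi> (P X) \<le> 0 \<longrightarrow> upper_prev P (\<lambda>w. \<psi> (X w)) \<le> \<psi> (P X))"
proof -
  define c where "c = P X"
  define d where "d = upper_prev P X"
  have Pm: "P (\<lambda>w. - X w) = - d" unfolding d_def upper_prev_def by simp
  have cI: "c \<in> interior I" using int_low c_def by simp
  have dI: "d \<in> interior I" using int_up d_def by simp
  have XI: "X w \<in> I" for w using range_X by auto
  have psi': "convex_on I (\<lambda>x. - \<psi> x)" using psi_concave unfolding concave_on_def by simp
  have upphi: "upper_prev P (\<lambda>w. \<phi> (X w)) = - P (\<lambda>w. - \<phi> (X w))" unfolding upper_prev_def by simp
  have uppsi: "upper_prev P (\<lambda>w. \<psi> (X w)) = - P (\<lambda>w. - \<psi> (X w))" unfolding upper_prev_def by simp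
  obtain ac where ac: "((\<lambda>y. (\<phi> y - \<phi> c) / (y - c)) \<longlongrightarrow> ac) (at_right c)"
    "\<forall>x\<in>I. \<phi> x \<ge> \<phi> c + ac * (x - c)" using right_sub[OF phi_convex cI] by blast
  obtain ad where ad: "((\<lambda>y. (\<phi> y - \<phi> d) / (y - d)) \<longlongrightarrow> ad) (at_left d)"
    "\<forall>x\<in>I. \<phi> x \<ge> \<phi> d + ad * (x - d)" using left_sub[OF phi_convex dI] by blast
  obtain bc where bc: "((\<lambda>y. ((- \<psi> y) - (- \<psi> c)) / (y - c)) \<longlongrightarrow> bc) (at_right c)"
    "\<forall>x\<in>I. - \<psi> x \<ge> - \<psi> c + bc * (x - c)" using right_sub[OF psi' cI] by blast
  obtain bd where bd: "((\<lambda>y. ((- \<psi> y) - (- \<psi> d)) / (y - d)) \<longlongrightarrow> bd) (at_left d)"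
    "\<forall>x\<in>I. - \<psi> x \<ge> - \<psi> d + bd * (x - d)" using left_sub[OF psi' dI] by blast
  have rphi: "right_deriv \<phi> c = ac" unfolding right_deriv_def
    by (rule tendsto_Lim[OF trivial_limit_at_right_real ac(1)])
  have lphi: "left_deriv \<phi> d = ad" unfolding left_deriv_def
    by (rule tendsto_Lim[OF trivial_limit_at_left_real ad(1)])
  have rpsi: "right_deriv \<psi> c = - bc" unfolding right_deriv_def
    by (rule tendsto_Lim[OF trivial_limit_at_right_real neg_quot[OF bc(1)]])
  have lpsi: "left_deriv \<psi> d = - bd" unfolding left_deriv_def
    by (rule tendsto_Lim[OF trivial_limit_at_left_real neg_quot[OF bd(1)]])
  have g1: "P (\<lambda>w. \<psi> (X w)) \<le> \<psi> c"
  proof (rule lemA[OF coh inD(5) inD(1), of "- bc"])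
    fix w
    have h: "- \<psi> c + bc * (X w - c) \<le> - \<psi> (X w)" using bc(2) XI[of w] by blast
    show "\<psi> (X w) - - bc * (X w - P X) \<le> \<psi> c" using h unfolding c_def[symmetric] by (simp add: algebra_simps)
  qed
  have g2: "P (\<lambda>w. \<psi> (X w)) \<le> \<psi> d"
  proof (rule lemA[OF coh inD(5) inD(2), of "bd"])
    fix w
    have h: "- \<psi> d + bd * (X w - d) \<le> - \<psi> (X w)" using bd(2) XI[of w] by blast
    show "\<psi> (X w) - bd * (- X w - P (\<lambda>w. - X w)) \<le> \<psi> d" using h unfolding Pm by (simp add: algebra_simps)
  qed
  have g3: "P (\<lambda>w. - \<phi> (X w)) \<le> - \<phi> c"
  proof (rule lemA[OF coh inD(4) inD(1), of "- ac"])
    fix w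
    have h: "\<phi> c + ac * (X w - c) \<le> \<phi> (X w)" using ac(2) XI[of w] by blast
    show "- \<phi> (X w) - - ac * (X w - P X) \<le> - \<phi> c" using h unfolding c_def[symmetric] by (simp add: algebra_simps)
  qed
  have g4: "P (\<lambda>w. - \<phi> (X w)) \<le> - \<phi> d"
  proof (rule lemA[OF coh inD(4) inD(2), of "ad"])
    fix w
    have h: "\<phi> d + ad * (X w - d) \<le> \<phi> (X w)" using ad(2) XI[of w] by blast
    show "- \<phi> (X w) - ad * (- X w - P (\<lambda>w. - X w)) \<le> - \<phi> d" using h unfolding Pm by (simp add: algebra_simps)
  qed
  have g5: "P (\<lambda>w. \<phi> (X w)) \<ge> \<phi> c" if "ac \<ge> 0"
  proof (rule lemB[OF coh inD(3) inD(1) that])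
    fix w
    have h: "\<phi> c + ac * (X w - c) \<le> \<phi> (X w)" using ac(2) XI[of w] by blast
    show "ac * (X w - P X) - \<phi> (X w) \<le> - \<phi> c" using h unfolding c_def[symmetric] by (simp add: algebra_simps)
  qed
  have g6: "P (\<lambda>w. \<phi> (X w)) \<ge> \<phi> d" if "ad \<le> 0"
  proof (rule lemB[OF coh inD(3) inD(2), of "- ad"])
    show "0 \<le> - ad" using that by simp
    fix w
    have h: "\<phi> d + ad * (X w - d) \<le> \<phi> (X w)" using ad(2) XI[of w] by blast
    show "- ad * (- X w - P (\<lambda>w. - X w)) - \<phi> (X w) \<le> - \<phi> d" using h unfolding Pm by (simp add: algebra_simps)
  qed
  have g7: "P (\<lambda>w. - \<psi> (X w)) \<ge> - \<psi> d" if "bd \<le> 0"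
  proof (rule lemB[OF coh inD(6) inD(2), of "- bd"])
    show "0 \<le> - bd" using that by simp
    fix w
    have h: "- \<psi> d + bd * (X w - d) \<le> - \<psi> (X w)" using bd(2) XI[of w] by blast
    show "- bd * (- X w - P (\<lambda>w. - X w)) - (- \<psi> (X w)) \<le> - (- \<psi> d)" using h unfolding Pm by (simp add: algebra_simps)
  qed
  have g8: "P (\<lambda>w. - \<psi> (X w)) \<ge> - \<psi> c" if "bc \<ge> 0"
  proof (rule lemB[OF coh inD(6) inD(1) that])
    fix w
    have h: "- \<psi> c + bc * (X w - c) \<le> - \<psi> (X w)" using bc(2) XI[of w] by blast
    show "bc * (X w - P X) - (- \<psi> (X w)) \<le> - (- \<psi> c)" using h unfolding c_def[symmetric] by (simp add: algebra_simps)
  qed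
  show ?thesis
    unfolding c_def[symmetric] d_def[symmetric] upphi uppsi rphi lphi rpsi lpsi
    using g1 g2 g3 g4 g5 g6 g7 g8 by auto
qed

end
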